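(* Let $m\ge1$, $0<\lambda_1\le\dots\le\lambda_m$, $0<\Lambda_0\le\Lambda_1$, and let $a,b$ be positive definite (symmetric) $m\times m$ matrices with $\Lambda_0I\le a,b\le\Lambda_1I$. Set $\theta=\Lambda_0^{-1}m\|a-b\|_s$. Then for all $t>0$, $$\Big|\frac{\det\widetilde b(t)}{\det\widetilde a(t)}-1\Big|\le\theta e^\theta.$$
   Context: $a(t)$ has entries $a_{ij}(1-e^{-(\lambda_i+\lambda_j)t})/(\lambda_i+\lambda_j)$; $g(t)$ is diagonal with $g_{ii}(t)=(1-e^{-2\lambda_it})/(2\lambda_i)$, $G(t)=g(t)^{-1}$; $\widetilde a(t)=G(t)^{1/2}a(t)G(t)^{1/2}$, and $\widetilde b(t)$ analogously from $b$. $\|c\|_s=\max\{\sup_i\sum_j|c_{ij}|,\sup_j\sum_i|c_{ij}|\}$. *)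

theory Defs
  imports Complex_Main "Jordan_Normal_Form.Determinant"
begin

definition loewner_le :: "nat \<Rightarrow> real mat \<Rightarrow> real mat \<Rightarrow> bool" where
  "loewner_le m A B \<longleftrightarrow> (\<forall>v \<in> carrier_vec m. 0 \<le> v \<bullet> ((B - A) *\<^sub>v v))"

definition snorm :: "nat \<Rightarrow> real mat \<Rightarrow> real" where
  "snorm m c = max (Max {\<Sum>j<m. \<bar>c $$ (i,j)\<bar> | i. i < m})
                   (Max {\<Sum>i<m. \<bar>c $$ (i,j)\<bar> | j. j < m})"

definition mat_t :: "nat \<Rightarrow> (nat \<Rightarrow> real) \<Rightarrow> real mat \<Rightarrow> real \<Rightarrow> real mat" where
  "mat_t m lam a t = mat m m (\<lambda>(i,j). a $$ (i,j) * (1 - exp (-(lam i + lam j) * t)) / (lam i + lam j))"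

definition g_t :: "nat \<Rightarrow> (nat \<Rightarrow> real) \<Rightarrow> real \<Rightarrow> real mat" where
  "g_t m lam t = mat_diag m (\<lambda>i. (1 - exp (-2 * lam i * t)) / (2 * lam i))"

definition G_half :: "nat \<Rightarrow> (nat \<Rightarrow> real) \<Rightarrow> real \<Rightarrow> real mat" where
  "G_half m lam t = mat_diag m (\<lambda>i. sqrt (1 / (g_t m lam t $$ (i,i))))"

definition tilde_t :: "nat \<Rightarrow> (nat \<Rightarrow> real) \<Rightarrow> real mat \<Rightarrow> real \<Rightarrow> real mat" where
  "tilde_t m lam a t = G_half m lam t * mat_t m lam a t * G_half m lam t"

end

theory Submission imports Defs begin

lemma schur_det:
  fixes M :: "real mat"
  assumes M: "M \<in> carrier_mat (Suc k) (Suc k)" and M0: "M $$ (0,0) \<noteq> 0"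
  shows "det M = M $$ (0,0) * det (mat k k (\<lambda>(i,j). M$$(Suc i,Suc j) - M$$(Suc i,0) * M$$(0,Suc j) / M$$(0,0)))"
proof -
  define E where "E = mat (Suc k) (Suc k) (\<lambda>(i,j). if i=j then 1 else if j=0 then -M$$(i,0)/M$$(0,0) else (0::real))"
  have E: "E \<in> carrier_mat (Suc k) (Suc k)" unfolding E_def by auto
  have dE: "det E = 1"
    by (subst det_lower_triangular[of "Suc k"], auto simp: E_def prod_list_diag_prod)
  define N where "N = E * M"
  have N: "N \<in> carrier_mat (Suc k) (Suc k)" using E M unfolding N_def by auto
  have dN: "det N = det M" unfolding N_def using det_mult[OF E M] dE by simp
  have Nij: "N $$ (i,j) = (if i = 0 then M$$(0,j) else M$$(i,j) - M$$(i,0)/M$$(0,0) * M$$(0,j))"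
    if "i < Suc k" "j < Suc k" for i j
  proof -
    have "N $$ (i,j) = (\<Sum>l\<in>{0..<Suc k}. E$$(i,l) * M$$(l,j))"
      unfolding N_def using that E M by (auto simp: scalar_prod_def)
    also have "\<dots> = (if i = 0 then M$$(0,j) else M$$(i,j) - M$$(i,0)/M$$(0,0) * M$$(0,j))"
    proof (cases "i = 0")
      case True
      then show ?thesis using that
        by (subst sum.remove[of _ 0], auto simp: E_def)
    next
      case False
      have "(\<Sum>l\<in>{0..<Suc k}. E$$(i,l) * M$$(l,j)) = E$$(i,i) * M$$(i,j) + (\<Sum>l\<in>{0..<Suc k}-{i}. E$$(i,l) * M$$(l,j))"
        using that by (subst sum.remove[of _ i], auto)
      also have "(\<Sum>l\<in>{0..<Suc k}-{i}. E$$(i,l) * M$$(l,j)) = E$$(i,0) * M$$(0,j) + (\<Sum>l\<in>{0..<Suc k}-{i}-{0}. E$$(i,l) * M$$(l,j))"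
        using that False by (subst sum.remove[of _ 0], auto)
      also have "(\<Sum>l\<in>{0..<Suc k}-{i}-{0}. E$$(i,l) * M$$(l,j)) = 0"
        using that by (intro sum.neutral, auto simp: E_def)
      finally show ?thesis using False that by (auto simp: E_def)
    qed
    finally show ?thesis .
  qed
  have "det N = (\<Sum>i<Suc k. N $$ (i,0) * cofactor N i 0)"
    using laplace_expansion_column[OF N, of 0] by simp
  also have "\<dots> = N $$ (0,0) * cofactor N 0 0"
    by (subst sum.remove[of _ 0], auto simp: Nij M0 intro!: sum.neutral)
  finally have d1: "det N = N $$ (0, 0) * cofactor N 0 0" .
  have md: "mat_delete N 0 0 = mat k k (\<lambda>(i,j). M$$(Suc i,Suc j) - M$$(Suc i,0) * M$$(0,Suc j) / M$$(0,0))"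
    using N by (intro eq_matI, auto simp: mat_delete_def Nij)
  show ?thesis using dN d1 md by (simp add: cofactor_def Nij)
qed

definition Q :: "nat \<Rightarrow> real mat \<Rightarrow> (nat \<Rightarrow> real) \<Rightarrow> real" where
  "Q n M x = (\<Sum>i<n. \<Sum>j<n. x i * M$$(i,j) * x j)"

definition schur :: "real mat \<Rightarrow> nat \<Rightarrow> real mat" where
  "schur M k = mat k k (\<lambda>(i,j). M$$(Suc i,Suc j) - M$$(Suc i,0) * M$$(0,Suc j) / M$$(0,0))"

lemma quad_split:
  fixes M :: "real mat"
  assumes sym: "\<And>j. j < k \<Longrightarrow> M$$(Suc j,0) = M$$(0,Suc j)" and M0: "M$$(0,0) \<noteq> 0"
  shows "Q (Suc k) M (\<lambda>i. if i=0 then \<alpha> else x(i-1)) =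
     Q k (schur M k) x + M$$(0,0) * (\<alpha> + (\<Sum>j<k. M$$(0,Suc j) * x j)/M$$(0,0))^2"
proof -
  define L where "L = (\<Sum>j<k. M$$(0,Suc j) * x j)"
  have L2: "(\<Sum>i<k. x i * M$$(Suc i,0)) = L" unfolding L_def
    by (rule sum.cong, auto simp: sym mult.commute)
  have "Q (Suc k) M (\<lambda>i. if i=0 then \<alpha> else x(i-1)) =
     \<alpha> * M$$(0,0) * \<alpha> + (\<Sum>j<k. \<alpha> * M$$(0,Suc j) * x j) + (\<Sum>i<k. x i * M$$(Suc i,0) * \<alpha>)
     + (\<Sum>i<k. \<Sum>j<k. x i * M$$(Suc i,Suc j) * x j)"
    unfolding Q_def sum.lessThan_Suc_shift by (simp add: sum.distrib del: sum.lessThan_Suc)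
  also have "(\<Sum>j<k. \<alpha> * M$$(0,Suc j) * x j) = \<alpha> * L" unfolding L_def
    by (simp add: sum_distrib_left mult.assoc)
  also have "(\<Sum>i<k. x i * M$$(Suc i,0) * \<alpha>) = \<alpha> * L" using L2
    by (simp add: sum_distrib_left[symmetric] mult.commute)
  also have "Q k (schur M k) x = (\<Sum>i<k. \<Sum>j<k. x i * M$$(Suc i,Suc j) * x j)
       - (\<Sum>i<k. x i * M$$(Suc i,0)) * (\<Sum>j<k. M$$(0,Suc j) * x j) / M$$(0,0)"
  proof -
    have "Q k (schur M k) x = (\<Sum>i<k. \<Sum>j<k. x i * M$$(Suc i,Suc j) * x j - (x i * M$$(Suc i,0)) * (M$$(0,Suc j) * x j) / M$$(0,0))"
      unfolding Q_def schur_def by (intro sum.cong refl, auto simp: algebra_simps diff_divide_distrib)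
    also have "\<dots> = (\<Sum>i<k. \<Sum>j<k. x i * M$$(Suc i,Suc j) * x j)
       - (\<Sum>i<k. x i * M$$(Suc i,0)) * (\<Sum>j<k. M$$(0,Suc j) * x j) / M$$(0,0)"
      by (simp add: sum_subtractf sum_distrib_left sum_distrib_right sum_divide_distrib, rule sum.swap)
    finally show ?thesis .
  qed
  ultimately have e: "Q (Suc k) M (\<lambda>i. if i=0 then \<alpha> else x(i-1)) =
     \<alpha> * M$$(0,0) * \<alpha> + \<alpha> * L + \<alpha> * L + (Q k (schur M k) x + L * L / M$$(0,0))"
    unfolding L2 L_def[symmetric] by simp
  have "M$$(0,0) * (\<alpha> + L/M$$(0,0))^2 = \<alpha> * M$$(0,0) * \<alpha> + \<alpha> * L + \<alpha> * L + L * L / M$$(0,0)"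
    using M0 by (simp add: field_simps power2_eq_square)
  then show ?thesis unfolding e L_def[symmetric] by simp
qed

lemma sumsq_split: "(\<Sum>i<Suc k. (if i=0 then \<alpha> else x(i-1))^2) = \<alpha>^2 + (\<Sum>i<k. (x i)^2)"
  unfolding sum.lessThan_Suc_shift by simp

lemma det_compare:
  fixes A B :: "real mat"
  assumes "A \<in> carrier_mat n n" "B \<in> carrier_mat n n"
    "\<forall>i<n. \<forall>j<n. A$$(i,j) = A$$(j,i)" "\<forall>i<n. \<forall>j<n. B$$(i,j) = B$$(j,i)"
    "d > 0" "\<forall>x. Q n A x \<ge> d * (\<Sum>i<n. (x i)^2)"
    "c > 0" "\<forall>x. Q n B x \<ge> c * Q n A x"
  shows "det B \<ge> c^n * det A \<and> det A > 0"
  using assms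
proof (induction n arbitrary: A B)
  case 0
  then show ?case by (simp add: det_def)
next
  case (Suc k)
  note A = Suc.prems(1) and B = Suc.prems(2) and symA = Suc.prems(3) and symB = Suc.prems(4)
    and pd = Suc.prems(6) and cmp = Suc.prems(8)
  note d = \<open>d > 0\<close> and c = \<open>c > 0\<close>
  define e0 where "e0 = (\<lambda>i::nat. if i = 0 then 1 else (0::real))"
  have Qe: "Q (Suc k) M e0 = M$$(0,0)" for M
    unfolding Q_def e0_def sum.lessThan_Suc_shift by (simp del: sum.lessThan_Suc)
  have se: "(\<Sum>i<Suc k. (e0 i)^2) = 1" unfolding e0_def sum.lessThan_Suc_shift by (simp del: sum.lessThan_Suc)
  have a0: "A$$(0,0) \<ge> d" using pd[rule_format, of e0] Qe se by simp
  hence a0p: "A$$(0,0) > 0" using d by simp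
  have b0: "B$$(0,0) \<ge> c * A$$(0,0)" using cmp[rule_format, of e0] Qe by simp
  hence b0p: "B$$(0,0) > 0" using a0p c by (meson mult_pos_pos order_less_le_trans)
  have sA: "\<And>j. j < k \<Longrightarrow> A$$(Suc j,0) = A$$(0,Suc j)" using symA by auto
  have sB: "\<And>j. j < k \<Longrightarrow> B$$(Suc j,0) = B$$(0,Suc j)" using symB by auto
  define v where "v = (\<lambda>(M::real mat) x. (\<lambda>i. if i=0 then - (\<Sum>j<k. M$$(0,Suc j) * x j)/M$$(0,0) else x(i-1)))"
  have QA: "Q (Suc k) A (v A x) = Q k (schur A k) x" for x
    unfolding v_def using quad_split[OF sA, where x=x and \<alpha>="- (\<Sum>j<k. A$$(0,Suc j) * x j)/A$$(0,0)"] a0p by simp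
  have QB: "Q (Suc k) B (v B x) = Q k (schur B k) x" for x
    unfolding v_def using quad_split[OF sB, where x=x and \<alpha>="- (\<Sum>j<k. B$$(0,Suc j) * x j)/B$$(0,0)"] b0p by simp
  have QAge: "Q (Suc k) A (\<lambda>i. if i=0 then \<alpha> else x(i-1)) \<ge> Q k (schur A k) x" for x \<alpha>
    using quad_split[OF sA, where x=x and \<alpha>=\<alpha>] a0p by simp
  have IH: "c ^ k * det (schur A k) \<le> det (schur B k) \<and> 0 < det (schur A k)"
  proof (rule Suc.IH)
    show "schur A k \<in> carrier_mat k k" "schur B k \<in> carrier_mat k k" unfolding schur_def by auto
    show "\<forall>i<k. \<forall>j<k. schur A k $$ (i, j) = schur A k $$ (j, i)"
      using symA sA unfolding schur_def by auto
    show "\<forall>i<k. \<forall>j<k. schur B k $$ (i, j) = schur B k $$ (j, i)"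
      using symB sB unfolding schur_def by auto
    show "0 < d" "0 < c" using d c by auto
    show "\<forall>x. d * (\<Sum>i<k. (x i)\<^sup>2) \<le> Q k (schur A k) x"
    proof
      fix x
      have "d * (\<Sum>i<k. (x i)\<^sup>2) \<le> d * (\<Sum>i<Suc k. (v A x i)\<^sup>2)"
        unfolding v_def sumsq_split using d by simp
      also have "\<dots> \<le> Q (Suc k) A (v A x)" using pd by auto
      finally show "d * (\<Sum>i<k. (x i)\<^sup>2) \<le> Q k (schur A k) x" using QA by simp
    qed
    show "\<forall>x. c * Q k (schur A k) x \<le> Q k (schur B k) x"
    proof
      fix x
      have "c * Q k (schur A k) x \<le> c * Q (Suc k) A (v B x)"
        using QAge[of x] c unfolding v_def by simp
      also have "\<dots> \<le> Q (Suc k) B (v B x)" using cmp by auto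
      finally show "c * Q k (schur A k) x \<le> Q k (schur B k) x" using QB by simp
    qed
  qed
  have dA: "det A = A$$(0,0) * det (schur A k)" unfolding schur_def
    using schur_det[OF A] a0p by simp
  have dB: "det B = B$$(0,0) * det (schur B k)" unfolding schur_def
    using schur_det[OF B] b0p by simp
  have "c^(Suc k) * det A = (c * A$$(0,0)) * (c^k * det (schur A k))" unfolding dA by simp
  also have "\<dots> \<le> B$$(0,0) * det (schur B k)"
    using IH b0 a0p c b0p by (intro mult_mono, auto)
  finally show ?case using dA dB IH a0p by simp
qed

lemma hderiv:
  fixes u :: real assumes "u \<noteq> 0"
  shows "((\<lambda>s. (1 - exp (-u * s)) / u) has_real_derivative exp (-u*s)) (at s)"
  using assms by (auto intro!: derivative_eq_intros simp: field_simps)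

lemma psd_kernel:
  fixes P :: "nat \<Rightarrow> nat \<Rightarrow> real" and \<mu> y :: "nat \<Rightarrow> real"
  assumes psd: "\<And>z. 0 \<le> (\<Sum>i<n. \<Sum>j<n. z i * P i j * z j)"
    and mu: "\<And>i. i < n \<Longrightarrow> \<mu> i > 0" and t: "t \<ge> 0"
  shows "0 \<le> (\<Sum>i<n. \<Sum>j<n. y i * P i j * y j * ((1 - exp (-(\<mu> i + \<mu> j) * t)) / (\<mu> i + \<mu> j)))"
proof -
  define F where "F = (\<lambda>s. (\<Sum>i<n. \<Sum>j<n. y i * P i j * y j * ((1 - exp (-(\<mu> i + \<mu> j) * s)) / (\<mu> i + \<mu> j))))"
  have D: "(F has_real_derivative (\<Sum>i<n. \<Sum>j<n. y i * P i j * y j * exp (-(\<mu> i + \<mu> j) * s))) (at s)" for s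
    unfolding F_def
  proof (intro DERIV_sum DERIV_cmult)
    fix i j assume "i \<in> {..<n}" "j \<in> {..<n}"
    then have "\<mu> i + \<mu> j \<noteq> 0" using mu by (metis add_pos_pos lessThan_iff less_irrefl)
    then show "((\<lambda>s. (1 - exp (-(\<mu> i + \<mu> j) * s)) / (\<mu> i + \<mu> j)) has_real_derivative exp (-(\<mu> i + \<mu> j) * s)) (at s)"
      by (rule hderiv)
  qed
  have "(\<Sum>i<n. \<Sum>j<n. y i * P i j * y j * exp (-(\<mu> i + \<mu> j) * s)) =
        (\<Sum>i<n. \<Sum>j<n. (y i * exp (-\<mu> i * s)) * P i j * (y j * exp (-\<mu> j * s)))" for s
    by (intro sum.cong refl, simp add: algebra_simps exp_add[symmetric])
  hence Dnn: "0 \<le> (\<Sum>i<n. \<Sum>j<n. y i * P i j * y j * exp (-(\<mu> i + \<mu> j) * s))" for s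
    using psd by simp
  have "F 0 \<le> F t"
    by (rule DERIV_nonneg_imp_nondecreasing[OF t], use D Dnn in blast)
  moreover have "F 0 = 0" unfolding F_def by simp
  ultimately show ?thesis unfolding F_def by simp
qed


definition gam :: "(nat \<Rightarrow> real) \<Rightarrow> real \<Rightarrow> nat \<Rightarrow> real" where
  "gam lam t i = sqrt (1 / ((1 - exp (-2 * lam i * t)) / (2 * lam i)))"
definition hh :: "(nat \<Rightarrow> real) \<Rightarrow> real \<Rightarrow> nat \<Rightarrow> nat \<Rightarrow> real" where
  "hh lam t i j = (1 - exp (-(lam i + lam j) * t)) / (lam i + lam j)"

lemma tilde_entry:
  assumes a: "a \<in> carrier_mat m m" and i: "i < m" and j: "j < m"
  shows "tilde_t m lam a t $$ (i,j) = gam lam t i * (a$$(i,j) * hh lam t i j) * gam lam t j"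
proof -
  have G: "G_half m lam t = mat_diag m (gam lam t)"
    unfolding G_half_def g_t_def gam_def by (rule eq_matI, auto simp: mat_diag_def)
  have at: "mat_t m lam a t \<in> carrier_mat m m" unfolding mat_t_def by auto
  have "tilde_t m lam a t = mat m m (\<lambda>(i,j). gam lam t i * mat_t m lam a t $$ (i,j) * gam lam t j)"
    unfolding tilde_t_def G mat_diag_mult_left[OF at]
    by (subst mat_diag_mult_right[of _ m], auto)
  then show ?thesis using i j by (simp add: mat_t_def hh_def)
qed

lemma schur_test:
  fixes E w :: "nat \<Rightarrow> nat \<Rightarrow> real" and x :: "nat \<Rightarrow> real"
  assumes w: "\<And>i j. i < m \<Longrightarrow> j < m \<Longrightarrow> \<bar>w i j\<bar> \<le> 1"
    and row: "\<And>i. i < m \<Longrightarrow> (\<Sum>j<m. \<bar>E i j\<bar>) \<le> s"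
    and col: "\<And>j. j < m \<Longrightarrow> (\<Sum>i<m. \<bar>E i j\<bar>) \<le> s"
  shows "\<bar>\<Sum>i<m. \<Sum>j<m. x i * x j * w i j * E i j\<bar> \<le> s * (\<Sum>i<m. (x i)^2)"
proof -
  have pt: "\<bar>x i * x j * w i j * E i j\<bar> \<le> \<bar>E i j\<bar> * (x i)^2 / 2 + \<bar>E i j\<bar> * (x j)^2 / 2"
    if "i < m" "j < m" for i j
  proof -
    have "\<bar>x i * x j * w i j * E i j\<bar> = \<bar>x i * x j\<bar> * \<bar>w i j\<bar> * \<bar>E i j\<bar>" by (simp add: abs_mult)
    also have "\<dots> \<le> \<bar>x i * x j\<bar> * 1 * \<bar>E i j\<bar>"
      using w[OF that] by (intro mult_right_mono mult_left_mono) auto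
    also have "\<bar>x i * x j\<bar> \<le> ((x i)^2 + (x j)^2) / 2"
    proof -
      have "0 \<le> (\<bar>x i\<bar> - \<bar>x j\<bar>)^2" by simp
      thus ?thesis by (simp add: abs_mult power2_eq_square algebra_simps)
    qed
    hence "\<bar>x i * x j\<bar> * 1 * \<bar>E i j\<bar> \<le> ((x i)^2 + (x j)^2) / 2 * \<bar>E i j\<bar>"
      by (intro mult_right_mono) auto
    finally show ?thesis by (simp add: algebra_simps add_divide_distrib)
  qed
  have "\<bar>\<Sum>i<m. \<Sum>j<m. x i * x j * w i j * E i j\<bar> \<le> (\<Sum>i<m. \<bar>\<Sum>j<m. x i * x j * w i j * E i j\<bar>)"
    by (rule sum_abs)
  also have "\<dots> \<le> (\<Sum>i<m. \<Sum>j<m. \<bar>E i j\<bar> * (x i)^2 / 2 + \<bar>E i j\<bar> * (x j)^2 / 2)"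
    by (intro sum_mono order_trans[OF sum_abs] pt) auto
  also have "\<dots> = (\<Sum>i<m. (x i)^2 / 2 * (\<Sum>j<m. \<bar>E i j\<bar>)) + (\<Sum>j<m. (x j)^2 / 2 * (\<Sum>i<m. \<bar>E i j\<bar>))"
  proof -
    have 1: "(\<Sum>i<m. (x i)^2 / 2 * (\<Sum>j<m. \<bar>E i j\<bar>)) = (\<Sum>i<m. \<Sum>j<m. \<bar>E i j\<bar> * (x i)^2 / 2)"
      by (simp add: sum_distrib_left sum_divide_distrib mult.commute)
    have 2: "(\<Sum>j<m. (x j)^2 / 2 * (\<Sum>i<m. \<bar>E i j\<bar>)) = (\<Sum>i<m. \<Sum>j<m. \<bar>E i j\<bar> * (x j)^2 / 2)"
      by (simp add: sum_distrib_left sum_divide_distrib mult.commute, rule sum.swap)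
    show ?thesis unfolding 1 2 sum.distrib[symmetric] ..
  qed
  also have "\<dots> \<le> (\<Sum>i<m. (x i)^2 / 2 * s) + (\<Sum>j<m. (x j)^2 / 2 * s)"
    using row col by (intro add_mono sum_mono mult_left_mono) auto
  also have "\<dots> = s * (\<Sum>i<m. (x i)^2)"
    by (simp add: sum_distrib_left sum_distrib_right algebra_simps sum.distrib[symmetric])
  finally show ?thesis .
qed


lemma loewner_sum:
  fixes A B :: "real mat"
  assumes A: "A \<in> carrier_mat m m" and B: "B \<in> carrier_mat m m" and le: "loewner_le m A B"
  shows "0 \<le> (\<Sum>i<m. \<Sum>j<m. z i * (B$$(i,j) - A$$(i,j)) * z j)"
proof -
  have v: "vec m z \<in> carrier_vec m" by simp
  have "0 \<le> vec m z \<bullet> ((B - A) *\<^sub>v vec m z)" using le v unfolding loewner_le_def by blast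
  also have "vec m z \<bullet> ((B - A) *\<^sub>v vec m z) = (\<Sum>i<m. \<Sum>j<m. z i * (B$$(i,j) - A$$(i,j)) * z j)"
    using A B by (simp add: scalar_prod_def sum_distrib_left atLeast0LessThan mult.assoc)
  finally show ?thesis .
qed

lemma hh_pos: assumes "lam i > 0" "lam j > 0" "t > 0" shows "hh lam t i j > 0"
proof -
  have "(lam i + lam j) * t > 0" using assms by simp
  hence "-(lam i + lam j) * t < 0" by linarith
  hence "exp (-(lam i + lam j) * t) < 1" by (subst exp_less_one_iff)
  thus ?thesis unfolding hh_def using assms by (intro divide_pos_pos) auto
qed

lemma gam_sq: assumes "lam i > 0" "t > 0" shows "(gam lam t i)^2 * hh lam t i i = 1" "gam lam t i \<ge> 0"
proof -
  have h: "hh lam t i i > 0" using hh_pos assms by blast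
  have e: "hh lam t i i = (1 - exp (-2 * lam i * t)) / (2 * lam i)"
    unfolding hh_def by (simp add: algebra_simps)
  have "(sqrt (1 / hh lam t i i))^2 = 1 / hh lam t i i" using h by (intro real_sqrt_pow2) simp
  moreover have gd: "gam lam t i = sqrt (1 / hh lam t i i)" unfolding gam_def e ..
  ultimately show "(gam lam t i)^2 * hh lam t i i = 1" using h
    by simp
  show "gam lam t i \<ge> 0" using gd h by simp
qed

lemma hh_sym: "hh lam t i j = hh lam t j i"
  unfolding hh_def by (simp add: add.commute)

lemma w_le1:
  assumes "lam i > 0" "lam j > 0" "t > 0"
  shows "gam lam t i * gam lam t j * hh lam t i j \<le> 1"
proof -
  define \<mu> where "\<mu> = (\<lambda>k::nat. if k = 0 then lam i else lam j)"
  define y where "y = (\<lambda>k::nat. if k = 0 then gam lam t i else - gam lam t j)"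
  have psd: "0 \<le> (\<Sum>k<2. \<Sum>l<2. z k * (1::real) * z l)" for z :: "nat \<Rightarrow> real"
  proof -
    have "(\<Sum>k<2. \<Sum>l<2. z k * (1::real) * z l) = (\<Sum>k<2. z k)^2"
      by (simp add: power2_eq_square sum_distrib_left sum_distrib_right, rule sum.swap)
    thus ?thesis by simp
  qed
  have "0 \<le> (\<Sum>k<2. \<Sum>l<2. y k * 1 * y l * ((1 - exp (-(\<mu> k + \<mu> l) * t)) / (\<mu> k + \<mu> l)))"
    by (rule psd_kernel[OF psd], use assms in \<open>auto simp: \<mu>_def\<close>)
  also have "\<dots> = (\<Sum>k<2. \<Sum>l<2. y k * y l * hh lam t (if k=0 then i else j) (if l=0 then i else j))"
    by (intro sum.cong refl, auto simp: \<mu>_def hh_def)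
  also have "\<dots> = (gam lam t i)^2 * hh lam t i i + (gam lam t j)^2 * hh lam t j j - 2 * (gam lam t i * gam lam t j * hh lam t i j)"
    using hh_sym[of lam t j i] by (simp add: numeral_2_eq_2 y_def power2_eq_square algebra_simps)
  finally show ?thesis using gam_sq[of lam i t] gam_sq[of lam j t] assms by simp
qed

lemma quad_lower:
  assumes a: "a \<in> carrier_mat m m" and le: "loewner_le m (\<Lambda>0 \<cdot>\<^sub>m 1\<^sub>m m) a"
    and lam: "\<And>i. i < m \<Longrightarrow> lam i > 0" and t: "t > 0"
  shows "\<Lambda>0 * (\<Sum>i<m. (x i)^2) \<le> Q m (tilde_t m lam a t) x"
proof -
  define y where "y = (\<lambda>i. gam lam t i * x i)"
  define P where "P = (\<lambda>i j. a$$(i,j) - (\<Lambda>0 \<cdot>\<^sub>m 1\<^sub>m m)$$(i,j))"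
  have "0 \<le> (\<Sum>i<m. \<Sum>j<m. y i * P i j * y j * ((1 - exp (-(lam i + lam j) * t)) / (lam i + lam j)))"
    by (rule psd_kernel, unfold P_def, rule loewner_sum[OF _ a le], auto simp: lam t less_imp_le)
  also have "\<dots> = (\<Sum>i<m. \<Sum>j<m. y i * a$$(i,j) * y j * hh lam t i j) - (\<Sum>i<m. \<Sum>j<m. if i = j then \<Lambda>0 * (y i * y j * hh lam t i j) else 0)"
    unfolding sum_subtractf[symmetric]
    by (intro sum.cong refl, auto simp: P_def hh_def algebra_simps)
  also have "(\<Sum>i<m. \<Sum>j<m. if i = j then \<Lambda>0 * (y i * y j * hh lam t i j) else 0) = (\<Sum>i<m. \<Lambda>0 * (x i)^2)"
  proof (intro sum.cong refl)
    fix i assume i: "i \<in> {..<m}"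
    have "(\<Sum>j<m. if i = j then \<Lambda>0 * (y i * y j * hh lam t i j) else 0) = \<Lambda>0 * (y i * y i * hh lam t i i)"
      using i by (simp add: sum.delta)
    also have "\<dots> = \<Lambda>0 * (x i)^2 * ((gam lam t i)^2 * hh lam t i i)"
      unfolding y_def by (simp add: power2_eq_square algebra_simps)
    also have "\<dots> = \<Lambda>0 * (x i)^2" using gam_sq[of lam i t] lam i t by simp
    finally show "(\<Sum>j<m. if i = j then \<Lambda>0 * (y i * y j * hh lam t i j) else 0) = \<Lambda>0 * (x i)^2" .
  qed
  also have "(\<Sum>i<m. \<Sum>j<m. y i * a$$(i,j) * y j * hh lam t i j) = Q m (tilde_t m lam a t) x"
    unfolding Q_def y_def by (intro sum.cong refl, auto simp: tilde_entry[OF a] algebra_simps)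
  finally show ?thesis by (simp add: sum_distrib_left)
qed


lemma quad_diff:
  assumes a: "a \<in> carrier_mat m m" and b: "b \<in> carrier_mat m m"
    and lam: "\<And>i. i < m \<Longrightarrow> lam i > 0" and t: "t > 0"
    and row: "\<And>i. i < m \<Longrightarrow> (\<Sum>j<m. \<bar>(a - b)$$(i,j)\<bar>) \<le> s"
    and col: "\<And>j. j < m \<Longrightarrow> (\<Sum>i<m. \<bar>(a - b)$$(i,j)\<bar>) \<le> s"
  shows "\<bar>Q m (tilde_t m lam b t) x - Q m (tilde_t m lam a t) x\<bar> \<le> s * (\<Sum>i<m. (x i)^2)"
proof -
  have "Q m (tilde_t m lam b t) x - Q m (tilde_t m lam a t) x =
     (\<Sum>i<m. \<Sum>j<m. x i * x j * (gam lam t i * gam lam t j * hh lam t i j) * (b$$(i,j) - a$$(i,j)))"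
    unfolding Q_def sum_subtractf[symmetric]
    by (intro sum.cong refl, auto simp: tilde_entry[OF a] tilde_entry[OF b] algebra_simps)
  also have "\<bar>\<dots>\<bar> \<le> s * (\<Sum>i<m. (x i)^2)"
  proof (rule schur_test)
    fix i j assume ij: "i < m" "j < m"
    have "0 \<le> gam lam t i * gam lam t j * hh lam t i j"
      using gam_sq(2)[of lam i t] gam_sq(2)[of lam j t] hh_pos[of lam i j t] lam ij t by simp
    then show "\<bar>gam lam t i * gam lam t j * hh lam t i j\<bar> \<le> 1"
      using w_le1[of lam i j t] lam ij t by simp
  next
    fix i assume i: "i < m"
    have "(\<Sum>j<m. \<bar>b$$(i,j) - a$$(i,j)\<bar>) = (\<Sum>j<m. \<bar>(a - b)$$(i,j)\<bar>)"
      using a b i by (intro sum.cong refl, auto)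
    then show "(\<Sum>j<m. \<bar>b$$(i,j) - a$$(i,j)\<bar>) \<le> s" using row[OF i] by simp
  next
    fix j assume j: "j < m"
    have "(\<Sum>i<m. \<bar>b$$(i,j) - a$$(i,j)\<bar>) = (\<Sum>i<m. \<bar>(a - b)$$(i,j)\<bar>)"
      using a b j by (intro sum.cong refl, auto)
    then show "(\<Sum>i<m. \<bar>b$$(i,j) - a$$(i,j)\<bar>) \<le> s" using col[OF j] by simp
  qed
  finally show ?thesis .
qed

lemma snorm_row: "i < m \<Longrightarrow> (\<Sum>j<m. \<bar>c$$(i,j)\<bar>) \<le> snorm m c"
proof -
  assume i: "i < m"
  have "finite {\<Sum>j<m. \<bar>c $$ (i,j)\<bar> | i. i < m}" by simp
  hence "(\<Sum>j<m. \<bar>c$$(i,j)\<bar>) \<le> Max {\<Sum>j<m. \<bar>c $$ (i,j)\<bar> | i. i < m}"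
    using i by (intro Max_ge) auto
  thus ?thesis unfolding snorm_def by simp
qed

lemma snorm_col: "j < m \<Longrightarrow> (\<Sum>i<m. \<bar>c$$(i,j)\<bar>) \<le> snorm m c"
proof -
  assume j: "j < m"
  have "finite {\<Sum>i<m. \<bar>c $$ (i,j)\<bar> | j. j < m}" by simp
  hence "(\<Sum>i<m. \<bar>c$$(i,j)\<bar>) \<le> Max {\<Sum>i<m. \<bar>c $$ (i,j)\<bar> | j. j < m}"
    using j by (intro Max_ge) auto
  thus ?thesis unfolding snorm_def by simp
qed

lemma tilde_sym:
  assumes a: "a \<in> carrier_mat m m" and sa: "transpose_mat a = a"
  shows "\<forall>i<m. \<forall>j<m. tilde_t m lam a t $$ (i,j) = tilde_t m lam a t $$ (j,i)"
proof (intro allI impI)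
  fix i j assume ij: "i < m" "j < m"
  have "a $$ (i,j) = a $$ (j,i)" using ij a by (metis sa carrier_matD index_transpose_mat(1))
  then show "tilde_t m lam a t $$ (i,j) = tilde_t m lam a t $$ (j,i)"
    using ij by (simp add: tilde_entry[OF a] hh_sym[of lam t i j])
qed

theorem lemma4p6:
  fixes m :: nat and lam :: "nat \<Rightarrow> real" and \<Lambda>0 \<Lambda>1 :: real and a b :: "real mat"
  assumes "m \<ge> 1"
    and "0 < lam 0"
    and "\<And>i j. i \<le> j \<Longrightarrow> j < m \<Longrightarrow> lam i \<le> lam j"
    and "0 < \<Lambda>0" and "\<Lambda>0 \<le> \<Lambda>1"
    and "a \<in> carrier_mat m m" and "b \<in> carrier_mat m m"
    and "transpose_mat a = a" and "transpose_mat b = b"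
    and "loewner_le m (\<Lambda>0 \<cdot>\<^sub>m 1\<^sub>m m) a" and "loewner_le m a (\<Lambda>1 \<cdot>\<^sub>m 1\<^sub>m m)"
    and "loewner_le m (\<Lambda>0 \<cdot>\<^sub>m 1\<^sub>m m) b" and "loewner_le m b (\<Lambda>1 \<cdot>\<^sub>m 1\<^sub>m m)"
    and "\<theta> = m * snorm m (a - b) / \<Lambda>0"
    and "t > 0"
  shows "\<bar>det (tilde_t m lam b t) / det (tilde_t m lam a t) - 1\<bar> \<le> \<theta> * exp \<theta>"
proof -
  note a = assms(6) and b = assms(7) and t = assms(15) and L0 = assms(4)
  have lam: "\<And>i. i < m \<Longrightarrow> lam i > 0"
    using assms(2) assms(3) by (meson le0 less_le_trans)
  define A where "A = tilde_t m lam a t"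
  define B where "B = tilde_t m lam b t"
  define s where "s = snorm m (a - b)"
  define \<delta> where "\<delta> = s / \<Lambda>0"
  have th: "\<theta> = m * \<delta>" unfolding \<delta>_def s_def using assms(14) by simp
  have Ac: "A \<in> carrier_mat m m" and Bc: "B \<in> carrier_mat m m"
    unfolding A_def B_def tilde_t_def
    by (rule mult_carrier_mat[OF mult_carrier_mat], auto simp: G_half_def mat_t_def)+
  have sA: "\<forall>i<m. \<forall>j<m. A$$(i,j) = A$$(j,i)" unfolding A_def by (rule tilde_sym[OF a assms(8)])
  have sB: "\<forall>i<m. \<forall>j<m. B$$(i,j) = B$$(j,i)" unfolding B_def by (rule tilde_sym[OF b assms(9)])
  have pA: "\<forall>x. \<Lambda>0 * (\<Sum>i<m. (x i)^2) \<le> Q m A x"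
    unfolding A_def using quad_lower[OF a assms(10)] lam t by blast
  have pB: "\<forall>x. \<Lambda>0 * (\<Sum>i<m. (x i)^2) \<le> Q m B x"
    unfolding B_def using quad_lower[OF b assms(12)] lam t by blast
  have df: "\<bar>Q m B x - Q m A x\<bar> \<le> s * (\<Sum>i<m. (x i)^2)" for x
    unfolding A_def B_def s_def
    by (rule quad_diff[OF a b], use lam t in \<open>auto intro: snorm_row snorm_col\<close>)
  have s0: "s \<ge> 0"
  proof -
    have "0 \<le> (\<Sum>j<m. \<bar>(a-b)$$(0,j)\<bar>)" by (intro sum_nonneg) auto
    also have "\<dots> \<le> s" unfolding s_def using assms(1) by (intro snorm_row) auto
    finally show ?thesis .
  qed
  have d0: "\<delta> \<ge> 0" unfolding \<delta>_def using s0 L0 by simp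
  have sx: "s * (\<Sum>i<m. (x i)^2) \<le> \<delta> * Q m A x" for x
  proof -
    have "s * (\<Sum>i<m. (x i)^2) = \<delta> * (\<Lambda>0 * (\<Sum>i<m. (x i)^2))" unfolding \<delta>_def using L0 by simp
    also have "\<dots> \<le> \<delta> * Q m A x" using pA d0 by (intro mult_left_mono) auto
    finally show ?thesis .
  qed
  have detA: "det A > 0"
    using det_compare[OF Ac Ac sA sA L0 pA, of 1] by simp
  have detB: "det B > 0"
    using det_compare[OF Bc Bc sB sB L0 pB, of 1] by simp
  define r where "r = det B / det A"
  have r0: "r > 0" unfolding r_def using detA detB by simp
  have "(1 / (1 + \<delta>))^m * det B \<le> det A"
  proof -
    have "\<forall>x. 1 / (1 + \<delta>) * Q m B x \<le> Q m A x"
    proof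
      fix x
      have "Q m B x \<le> (1 + \<delta>) * Q m A x" using df[of x] sx[of x] by (simp add: algebra_simps)
      thus "1 / (1 + \<delta>) * Q m B x \<le> Q m A x" using d0
        by (subst mult.commute, subst times_divide_eq_right, simp, subst pos_divide_le_eq) (auto simp: mult.commute)
    qed
    thus ?thesis using det_compare[OF Bc Ac sB sA L0 pB] d0 by simp
  qed
  hence "det B / (1 + \<delta>)^m \<le> det A" by (simp add: power_one_over)
  hence "det B \<le> det A * (1 + \<delta>)^m" using d0 by (subst (asm) pos_divide_le_eq) auto
  hence "r \<le> (1 + \<delta>)^m" unfolding r_def using detA by (subst pos_divide_le_eq) (auto simp: mult.commute)
  also have "\<dots> \<le> exp \<delta> ^ m" using d0 by (intro power_mono) (auto simp: add.commute exp_ge_add_one_self)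
  also have "\<dots> = exp \<theta>" unfolding th by (simp add: exp_of_nat_mult)
  finally have up: "r \<le> exp \<theta>" .
  have th0: "\<theta> \<ge> 0" unfolding th using d0 by simp
  have "exp \<theta> - 1 \<le> \<theta> * exp \<theta>"
  proof -
    have "1 - \<theta> \<le> exp (-\<theta>)" using exp_ge_add_one_self[of "-\<theta>"] by simp
    hence "(1 - \<theta>) * exp \<theta> \<le> exp (-\<theta>) * exp \<theta>" by (intro mult_right_mono) auto
    thus ?thesis by (simp add: exp_minus algebra_simps)
  qed
  hence up2: "r - 1 \<le> \<theta> * exp \<theta>" using up by simp
  have low: "1 - r \<le> \<theta> * exp \<theta>"
  proof (cases "\<delta> < 1")
    case True
    have "(1 - \<delta>)^m * det A \<le> det B"
    proof (cases "\<delta> = 1")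
      case False
      have "\<forall>x. (1 - \<delta>) * Q m A x \<le> Q m B x"
      proof
        fix x show "(1 - \<delta>) * Q m A x \<le> Q m B x" using df[of x] sx[of x] by (simp add: algebra_simps)
      qed
      thus ?thesis using det_compare[OF Ac Bc sA sB L0 pA] True by simp
    qed (use True in simp)
    hence "(1 - \<delta>)^m \<le> r" unfolding r_def using detA by (subst pos_le_divide_eq) auto
    moreover have "1 + real m * (-\<delta>) \<le> (1 + -\<delta>)^m"
      by (rule Bernoulli_inequality) (use True in simp)
    ultimately have "1 - r \<le> \<theta>" unfolding th by simp
    also have "\<theta> \<le> \<theta> * exp \<theta>" using th0 by (simp add: mult_le_cancel_left1 one_le_exp_iff)
    finally show ?thesis .
  next
    case False
    have "1 * 1 \<le> real m * \<delta>" using False assms(1) by (intro mult_mono) auto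
    hence "1 \<le> \<theta>" unfolding th by simp
    hence "1 - r \<le> \<theta>" using r0 by simp
    also have "\<theta> \<le> \<theta> * exp \<theta>" using th0 by (simp add: mult_le_cancel_left1 one_le_exp_iff)
    finally show ?thesis .
  qed
  show ?thesis using up2 low unfolding r_def A_def B_def by linarith
qed

end
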